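(* Let $F=\breve F(\alpha_1,\dots,\alpha_t)$ be a fence, let $i\in[t]$ with $\alpha_i\ge 2$, let $x\in\breve S_i$, let $v$ be the valley of $S_i$ (if it exists) and $p$ the peak of $S_i$ (if it exists), and put $y=s_{(i,1)}$, $z=s_{(i,\beta_i)}$. Then, as functions on $\mathcal J(F)$, \[ \alpha_i\chi_x+\chi_v+\chi_p=1-T_v-\sum_{y\trianglelefteq u\trianglelefteq x}\#[y,u]\,T_u+\sum_{x\vartriangleleft u\trianglelefteq z}\#[u,z]\,T_u , \] where $[a,b]=\{w\in F: a\trianglelefteq w\trianglelefteq b\}$ is an interval of $F$.
   Context: Fences: let $\alpha=(\alpha_1,\dots,\alpha_t)$ be positive integers with $t\ge2$ and $\alpha_1,\alpha_t\ge2$. Put $a_0=0$, $a_i=\alpha_1+\dots+\alpha_i$, $n=a_t-1$. The fence $\breve F(\alpha)$ is the poset (order $\trianglelefteq$) on $\{x_1,\dots,x_n\}$ whose cover relations are: for $1\le j\le n-1$ with $a_{i-1}\le j<a_i$, $x_j\lessdot x_{j+1}$ if $i$ is odd and $x_j\gtrdot x_{j+1}$ if $i$ is even. Segments: $S_1=\{x_j:1\le j\le a_1\}$, $S_i=\{x_j:a_{i-1}\le j\le a_i\}$ for $2\le i\le t-1$, $S_t=\{x_j:a_{t-1}\le j\le n\}$ (each a chain). The shared elements are $s_i=x_{a_i}$, $i\in[t-1]$; $s_i$ is a peak (covers two elements) for $i$ odd and a valley (is covered by two elements) for $i$ even. The peak (valley) of $S_i$ is the shared element of $S_i$ that is a peak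 (valley), if any. $\breve S_i$ is the set of unshared elements of $S_i$; $\beta_i=\#\breve S_i=\alpha_i-1$; $s_{(i,j)}$ is the $j$-th smallest element of $\breve S_i$ in the order of $F$. $\mathcal J(F)$ is the set of order ideals. For $q\in F$ and $I\in\mathcal J(F)$: $\chi_q(I)=1$ if $q\in\max(I)$ and $0$ otherwise; $T_q(I)=1$ if $q\notin I$ and $I\cup\{q\}$ is an ideal (i.e. $q\in\min(F\setminus I)$), $T_q(I)=-1$ if $q\in\max(I)$, and $T_q(I)=0$ otherwise. Convention: any statistic indexed by a nonexistent element (e.g. the valley of a segment with no valley) is identically zero. *)

theory Defs
  imports Main
begin

text \<open>A fence is given by the list alpha = [alpha_1, ..., alpha_t] (1-based indices in the
paper, alpha_i = alpha ! (i - 1)). The element x_j is represented by the natural number j.\<close>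

definition fa :: "nat list \<Rightarrow> nat \<Rightarrow> nat" where
  "fa alpha i = sum_list (take i alpha)"

definition fn :: "nat list \<Rightarrow> nat" where
  "fn alpha = fa alpha (length alpha) - 1"

definition felems :: "nat list \<Rightarrow> nat set" where
  "felems alpha = {1..fn alpha}"

text \<open>Cover relation: pairs (lower, upper).\<close>
definition fcover :: "nat list \<Rightarrow> (nat \<times> nat) set" where
  "fcover alpha =
     {(j, Suc j) | j i. 1 \<le> j \<and> j \<le> fn alpha - 1 \<and> 1 \<le> i \<and> i \<le> length alpha
        \<and> fa alpha (i - 1) \<le> j \<and> j < fa alpha i \<and> odd i}
   \<union> {(Suc j, j) | j i. 1 \<le> j \<and> j \<le> fn alpha - 1 \<and> 1 \<le> i \<and> i \<le> length alpha
        \<and> fa alpha (i - 1) \<le> j \<and> j < fa alpha i \<and> even i}"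

definition fle :: "nat list \<Rightarrow> nat \<Rightarrow> nat \<Rightarrow> bool" where
  "fle alpha u w \<longleftrightarrow> u \<in> felems alpha \<and> w \<in> felems alpha \<and> (u, w) \<in> (fcover alpha)\<^sup>*"

definition flt :: "nat list \<Rightarrow> nat \<Rightarrow> nat \<Rightarrow> bool" where
  "flt alpha u w \<longleftrightarrow> fle alpha u w \<and> u \<noteq> w"

definition finterval :: "nat list \<Rightarrow> nat \<Rightarrow> nat \<Rightarrow> nat set" where
  "finterval alpha u w = {q \<in> felems alpha. fle alpha u q \<and> fle alpha q w}"

definition fsegment :: "nat list \<Rightarrow> nat \<Rightarrow> nat set" where
  "fsegment alpha i = {fa alpha (i - 1) .. fa alpha i} \<inter> felems alpha"

definition fshared :: "nat list \<Rightarrow> nat set" where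
  "fshared alpha = {fa alpha k | k. 1 \<le> k \<and> k \<le> length alpha - 1}"

definition funshared :: "nat list \<Rightarrow> nat \<Rightarrow> nat set" where
  "funshared alpha i = fsegment alpha i - fshared alpha"

definition fis_peak :: "nat list \<Rightarrow> nat \<Rightarrow> bool" where
  "fis_peak alpha q \<longleftrightarrow> card {w \<in> felems alpha. (w, q) \<in> fcover alpha} = 2"

definition fis_valley :: "nat list \<Rightarrow> nat \<Rightarrow> bool" where
  "fis_valley alpha q \<longleftrightarrow> card {w \<in> felems alpha. (q, w) \<in> fcover alpha} = 2"

definition fpeak :: "nat list \<Rightarrow> nat \<Rightarrow> nat option" where
  "fpeak alpha i =
     (if \<exists>q \<in> fsegment alpha i \<inter> fshared alpha. fis_peak alpha q
      then Some (THE q. q \<in> fsegment alpha i \<inter> fshared alpha \<and> fis_peak alpha q)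
      else None)"

definition fvalley :: "nat list \<Rightarrow> nat \<Rightarrow> nat option" where
  "fvalley alpha i =
     (if \<exists>q \<in> fsegment alpha i \<inter> fshared alpha. fis_valley alpha q
      then Some (THE q. q \<in> fsegment alpha i \<inter> fshared alpha \<and> fis_valley alpha q)
      else None)"

definition fsmin :: "nat list \<Rightarrow> nat \<Rightarrow> nat" where
  "fsmin alpha i = (THE u. u \<in> funshared alpha i \<and> (\<forall>w \<in> funshared alpha i. fle alpha u w))"

definition fsmax :: "nat list \<Rightarrow> nat \<Rightarrow> nat" where
  "fsmax alpha i = (THE u. u \<in> funshared alpha i \<and> (\<forall>w \<in> funshared alpha i. fle alpha w u))"

definition fideal :: "nat list \<Rightarrow> nat set \<Rightarrow> bool" where
  "fideal alpha I \<longleftrightarrow> I \<subseteq> felems alpha \<and> (\<forall>u \<in> I. \<forall>w. fle alpha w u \<longrightarrow> w \<in> I)"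

definition fmax :: "nat list \<Rightarrow> nat set \<Rightarrow> nat set" where
  "fmax alpha I = {q \<in> I. \<not> (\<exists>w \<in> I. flt alpha q w)}"

definition fchi :: "nat list \<Rightarrow> nat \<Rightarrow> nat set \<Rightarrow> int" where
  "fchi alpha q I = (if q \<in> fmax alpha I then 1 else 0)"

definition fT :: "nat list \<Rightarrow> nat \<Rightarrow> nat set \<Rightarrow> int" where
  "fT alpha q I =
     (if q \<in> felems alpha \<and> q \<notin> I \<and> fideal alpha (insert q I) then 1
      else if q \<in> fmax alpha I then -1 else 0)"

definition optstat :: "(nat \<Rightarrow> nat set \<Rightarrow> int) \<Rightarrow> nat option \<Rightarrow> nat set \<Rightarrow> int" where
  "optstat f q I = (case q of None \<Rightarrow> 0 | Some r \<Rightarrow> f r I)"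

end

theory Submission
  imports Defs
begin



lemma fa_Suc: "k < length al \<Longrightarrow> fa al (Suc k) = fa al k + al ! k"
  by (simp add: fa_def take_Suc_conv_app_nth)

lemma fa_mono: "k \<le> k' \<Longrightarrow> fa al k \<le> fa al k'"
proof -
  assume "k \<le> k'"
  then obtain d where "k' = k + d" by (metis le_add_diff_inverse)
  then show ?thesis by (simp add: fa_def take_add)
qed

lemma fa0: "fa al 0 = 0" by (simp add: fa_def)

lemma no_both: "\<not> ((s, Suc s) \<in> fcover al \<and> (Suc s, s) \<in> fcover al)"
proof
  assume "(s, Suc s) \<in> fcover al \<and> (Suc s, s) \<in> fcover al"
  then obtain i i' where h: "odd i" "even i'" "fa al (i - 1) \<le> s" "s < fa al i"
     "fa al (i' - 1) \<le> s" "s < fa al i'" "1 \<le> i" "1 \<le> i'"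
    unfolding fcover_def by auto
  have "i \<noteq> i'" using h by auto
  then show False
  proof (cases "i < i'")
    case True
    then have "fa al i \<le> fa al (i' - 1)" by (intro fa_mono) auto
    then show False using h by auto
  next
    case False
    then have "fa al i' \<le> fa al (i - 1)" using \<open>i \<noteq> i'\<close> by (intro fa_mono) auto
    then show False using h by auto
  qed
qed

lemma cover_shape: "(u, w) \<in> fcover al \<Longrightarrow> (w = Suc u \<or> u = Suc w) \<and> u \<in> felems al \<and> w \<in> felems al"
  unfolding fcover_def felems_def by auto

lemma rt_dir:
  assumes "(u, w) \<in> (fcover al)\<^sup>*"
  shows "(u \<le> w \<and> (\<forall>j. u \<le> j \<and> j < w \<longrightarrow> (j, Suc j) \<in> fcover al))
       \<or> (w \<le> u \<and> (\<forall>j. w \<le> j \<and> j < u \<longrightarrow> (Suc j, j) \<in> fcover al))"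
  using assms
proof (induction rule: rtrancl_induct)
  case base
  then show ?case by auto
next
  case (step w w')
  from cover_shape[OF step(2)] have "w' = Suc w \<or> w = Suc w'" by auto
  then show ?case
  proof
    assume e: "w' = Suc w"
    have up: "(w, Suc w) \<in> fcover al" using step(2) e by simp
    from step(3) show ?case
    proof
      assume "u \<le> w \<and> (\<forall>j. u \<le> j \<and> j < w \<longrightarrow> (j, Suc j) \<in> fcover al)"
      then show ?case using e up by (auto simp: less_Suc_eq)
    next
      assume h: "w \<le> u \<and> (\<forall>j. w \<le> j \<and> j < u \<longrightarrow> (Suc j, j) \<in> fcover al)"
      show ?case
      proof (cases "w = u")
        case True then show ?thesis using e up by (auto simp: less_Suc_eq)
      next
        case False
        then have "(Suc w, w) \<in> fcover al" using h by auto
        then show ?thesis using up no_both by blast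
      qed
    qed
  next
    assume e: "w = Suc w'"
    have dn: "(Suc w', w') \<in> fcover al" using step(2) e by simp
    from step(3) show ?case
    proof
      assume h: "u \<le> w \<and> (\<forall>j. u \<le> j \<and> j < w \<longrightarrow> (j, Suc j) \<in> fcover al)"
      show ?case
      proof (cases "w = u")
        case True then show ?thesis using e dn by (auto simp: less_Suc_eq)
      next
        case False
        then have "(w', Suc w') \<in> fcover al" using h e by auto
        then show ?thesis using dn no_both by blast
      qed
    next
      assume "w \<le> u \<and> (\<forall>j. w \<le> j \<and> j < u \<longrightarrow> (Suc j, j) \<in> fcover al)"
      then show ?case using e dn by (auto simp: le_Suc_eq) (metis Suc_le_eq le_neq_implies_less)
    qed
  qed
qed

lemma up_rt: "(\<forall>j. u \<le> j \<and> j < u + d \<longrightarrow> (j, Suc j) \<in> C) \<Longrightarrow> (u, u + d) \<in> C\<^sup>*"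
proof (induction d)
  case 0 then show ?case by simp
next
  case (Suc d)
  then have "(u, u + d) \<in> C\<^sup>*" by auto
  moreover have "(u + d, Suc (u + d)) \<in> C" using Suc.prems by auto
  ultimately show ?case by simp
qed

lemma dn_rt: "(\<forall>j. w \<le> j \<and> j < w + d \<longrightarrow> (Suc j, j) \<in> C) \<Longrightarrow> (w + d, w) \<in> C\<^sup>*"
proof (induction d)
  case 0 then show ?case by simp
next
  case (Suc d)
  then have "(w + d, w) \<in> C\<^sup>*" by auto
  moreover have "(Suc (w + d), w + d) \<in> C" using Suc.prems by auto
  ultimately show ?case by (simp add: converse_rtrancl_into_rtrancl)
qed

lemma fle_iff: "fle al u w \<longleftrightarrow> u \<in> felems al \<and> w \<in> felems al \<and>
   ((u \<le> w \<and> (\<forall>j. u \<le> j \<and> j < w \<longrightarrow> (j, Suc j) \<in> fcover al))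
       \<or> (w \<le> u \<and> (\<forall>j. w \<le> j \<and> j < u \<longrightarrow> (Suc j, j) \<in> fcover al)))"
proof
  assume "fle al u w" then show "u \<in> felems al \<and> w \<in> felems al \<and>
   ((u \<le> w \<and> (\<forall>j. u \<le> j \<and> j < w \<longrightarrow> (j, Suc j) \<in> fcover al))
       \<or> (w \<le> u \<and> (\<forall>j. w \<le> j \<and> j < u \<longrightarrow> (Suc j, j) \<in> fcover al)))"
    using rt_dir unfolding fle_def by blast
next
  assume h: "u \<in> felems al \<and> w \<in> felems al \<and>
   ((u \<le> w \<and> (\<forall>j. u \<le> j \<and> j < w \<longrightarrow> (j, Suc j) \<in> fcover al))
       \<or> (w \<le> u \<and> (\<forall>j. w \<le> j \<and> j < u \<longrightarrow> (Suc j, j) \<in> fcover al)))"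
  have "(u, w) \<in> (fcover al)\<^sup>*"
  proof (cases "u \<le> w")
    case True
    then obtain d where d: "w = u + d" by (metis le_add_diff_inverse)
    show ?thesis
    proof (cases "u = w")
      case True then show ?thesis by simp
    next
      case False
      then have "\<forall>j. u \<le> j \<and> j < u + d \<longrightarrow> (j, Suc j) \<in> fcover al" using h d by auto
      then show ?thesis using up_rt d by metis
    qed
  next
    case False
    then obtain d where d: "u = w + d" by (metis le_add_diff_inverse nat_le_linear)
    have "\<forall>j. w \<le> j \<and> j < w + d \<longrightarrow> (Suc j, j) \<in> fcover al" using h d False by auto
    then show ?thesis using dn_rt d by metis
  qed
  then show "fle al u w" using h unfolding fle_def by auto
qed

lemma felems_iv: "a \<in> felems al \<Longrightarrow> b \<in> felems al \<Longrightarrow> a \<le> p \<Longrightarrow> p \<le> b \<Longrightarrow> p \<in> felems al"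
  unfolding felems_def by auto

lemma fle_betw: "fle al a p \<Longrightarrow> fle al p b \<Longrightarrow> min a b \<le> p \<and> p \<le> max a b"
proof (rule ccontr)
  assume h1: "fle al a p" and h2: "fle al p b" and nb: "\<not> (min a b \<le> p \<and> p \<le> max a b)"
  note d1 = h1[unfolded fle_iff] and d2 = h2[unfolded fle_iff]
  show False
  proof (cases "p < a \<and> p < b")
    case True
    then have "(Suc p, p) \<in> fcover al" "(p, Suc p) \<in> fcover al" using d1 d2 by auto
    then show False using no_both by blast
  next
    case False
    then have ab: "a < p \<and> b < p" using nb by auto
    then obtain q where q: "p = Suc q" by (cases p) auto
    have "a \<le> q" "q < p" "b \<le> q" using ab q by auto
    then have "(Suc q, q) \<in> fcover al" "(q, Suc q) \<in> fcover al" using d1 d2 q ab by auto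
    then show False using no_both by blast
  qed
qed

lemma fle_between: "fle al a b \<Longrightarrow> min a b \<le> p \<Longrightarrow> p \<le> max a b \<Longrightarrow> fle al a p \<and> fle al p b"
proof -
  assume h: "fle al a b" "min a b \<le> p" "p \<le> max a b"
  note d = h(1)[unfolded fle_iff]
  have pE: "p \<in> felems al" using d h(2,3) unfolding felems_def by auto
  show ?thesis
  proof (cases "a \<le> b")
    case True
    then have "\<forall>j. a \<le> j \<and> j < b \<longrightarrow> (j, Suc j) \<in> fcover al" using d by auto
    then show ?thesis using True h(2,3) d pE unfolding fle_iff by auto
  next
    case False
    then have "\<forall>j. b \<le> j \<and> j < a \<longrightarrow> (Suc j, j) \<in> fcover al" using d by auto
    then show ?thesis using False h(2,3) d pE unfolding fle_iff by auto
  qed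
qed

lemma fle_antisym: "fle al a b \<Longrightarrow> fle al b a \<Longrightarrow> a = b"
  using fle_betw[of al a b a] by auto

lemma fle_trans: "fle al a b \<Longrightarrow> fle al b c \<Longrightarrow> fle al a c"
  unfolding fle_def by auto

lemma finterval_eq: "fle al a b \<Longrightarrow> finterval al a b = {min a b .. max a b}"
proof -
  assume h: "fle al a b"
  show ?thesis
  proof
    show "finterval al a b \<subseteq> {min a b..max a b}"
      unfolding finterval_def using fle_betw by fastforce
    show "{min a b..max a b} \<subseteq> finterval al a b"
    proof
      fix p assume "p \<in> {min a b..max a b}"
      then have "fle al a p \<and> fle al p b" using fle_between[OF h] by auto
      then show "p \<in> finterval al a b" unfolding finterval_def fle_def by auto
    qed
  qed
qed

lemma L1: "fideal al I \<Longrightarrow> q \<in> I \<Longrightarrow> (q \<in> fmax al I \<longleftrightarrow> (\<forall>w. (q, w) \<in> fcover al \<longrightarrow> w \<notin> I))"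
proof
  assume hI: "fideal al I" and q: "q \<in> I" and m: "q \<in> fmax al I"
  show "\<forall>w. (q, w) \<in> fcover al \<longrightarrow> w \<notin> I"
  proof (intro allI impI)
    fix w assume c: "(q, w) \<in> fcover al"
    then have "flt al q w" using cover_shape[OF c] unfolding flt_def fle_def by auto
    then show "w \<notin> I" using m unfolding fmax_def by auto
  qed
next
  assume hI: "fideal al I" and q: "q \<in> I" and h: "\<forall>w. (q, w) \<in> fcover al \<longrightarrow> w \<notin> I"
  show "q \<in> fmax al I" unfolding fmax_def
  proof (clarsimp simp: q)
    fix w assume w: "w \<in> I" "flt al q w"
    then have "(q, w) \<in> (fcover al)\<^sup>*" "q \<noteq> w" unfolding flt_def fle_def by auto
    then obtain q' where "(q, q') \<in> fcover al" "(q', w) \<in> (fcover al)\<^sup>*"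
      by (metis converse_rtranclE)
    moreover then have "fle al q' w" using cover_shape w hI unfolding fle_def fideal_def by blast
    ultimately show False using h w hI unfolding fideal_def by blast
  qed
qed

lemma L2: "fideal al I \<Longrightarrow> q \<in> felems al \<Longrightarrow> q \<notin> I \<Longrightarrow>
   (fideal al (insert q I) \<longleftrightarrow> (\<forall>w. (w, q) \<in> fcover al \<longrightarrow> w \<in> I))"
proof
  assume hI: "fideal al I" and q: "q \<in> felems al" "q \<notin> I" and h: "fideal al (insert q I)"
  show "\<forall>w. (w, q) \<in> fcover al \<longrightarrow> w \<in> I"
  proof (intro allI impI)
    fix w assume c: "(w, q) \<in> fcover al"
    then have "fle al w q" "w \<noteq> q" using cover_shape[OF c] unfolding fle_def by auto
    then show "w \<in> I" using h unfolding fideal_def by blast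
  qed
next
  assume hI: "fideal al I" and q: "q \<in> felems al" "q \<notin> I" and h: "\<forall>w. (w, q) \<in> fcover al \<longrightarrow> w \<in> I"
  show "fideal al (insert q I)" unfolding fideal_def
  proof (intro conjI ballI allI impI)
    show "insert q I \<subseteq> felems al" using hI q unfolding fideal_def by auto
  next
    fix u w assume u: "u \<in> insert q I" and f: "fle al w u"
    show "w \<in> insert q I"
    proof (cases "u = q")
      case False then show ?thesis using u f hI unfolding fideal_def by blast
    next
      case True
      then have r: "(w, q) \<in> (fcover al)\<^sup>*" and wE: "w \<in> felems al" using f unfolding fle_def by auto
      show ?thesis
      proof (cases "w = q")
        case True then show ?thesis by simp
      next
        case False
        then obtain q' where "(w, q') \<in> (fcover al)\<^sup>*" "(q', q) \<in> fcover al"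
          using r by (metis rtranclE)
        moreover then have "fle al w q'" using wE cover_shape unfolding fle_def by blast
        ultimately show ?thesis using h hI unfolding fideal_def by blast
      qed
    qed
  qed
qed




lemma step_seg: "1 \<le> k \<Longrightarrow> k \<le> length al \<Longrightarrow> fa al (k - 1) \<le> s \<Longrightarrow> s < fa al k \<Longrightarrow> 1 \<le> s
  \<Longrightarrow> Suc s \<le> fn al \<Longrightarrow> (odd k \<longrightarrow> (s, Suc s) \<in> fcover al) \<and> (even k \<longrightarrow> (Suc s, s) \<in> fcover al)"
  unfolding fcover_def by auto

lemma no_both': "(u, w) \<in> fcover al \<Longrightarrow> (w, u) \<in> fcover al \<Longrightarrow> False"
  using cover_shape no_both by metis

lemma vtype: "2 \<le> q \<Longrightarrow> Suc q \<le> fn al \<Longrightarrow> (q, q - 1) \<in> fcover al \<Longrightarrow> (q, Suc q) \<in> fcover al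
  \<Longrightarrow> {w \<in> felems al. (q, w) \<in> fcover al} = {q - 1, Suc q} \<and> (\<forall>w. (w, q) \<notin> fcover al)"
proof -
  assume h: "2 \<le> q" "Suc q \<le> fn al" "(q, q - 1) \<in> fcover al" "(q, Suc q) \<in> fcover al"
  have 1: "(w, q) \<notin> fcover al" for w
  proof
    assume c: "(w, q) \<in> fcover al"
    then have "w = q - 1 \<or> w = Suc q" using cover_shape[OF c] by auto
    then show False using c h no_both' by metis
  qed
  have "{w \<in> felems al. (q, w) \<in> fcover al} = {q - 1, Suc q}"
    using cover_shape h(3,4) by fastforce
  then show ?thesis using 1 by auto
qed

lemma ptype: "2 \<le> q \<Longrightarrow> Suc q \<le> fn al \<Longrightarrow> (q - 1, q) \<in> fcover al \<Longrightarrow> (Suc q, q) \<in> fcover al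
  \<Longrightarrow> {w \<in> felems al. (w, q) \<in> fcover al} = {q - 1, Suc q} \<and> (\<forall>w. (q, w) \<notin> fcover al)"
proof -
  assume h: "2 \<le> q" "Suc q \<le> fn al" "(q - 1, q) \<in> fcover al" "(Suc q, q) \<in> fcover al"
  have 1: "(q, w) \<notin> fcover al" for w
  proof
    assume c: "(q, w) \<in> fcover al"
    then have "w = q - 1 \<or> w = Suc q" using cover_shape[OF c] by auto
    then show False using c h no_both' by metis
  qed
  have "{w \<in> felems al. (w, q) \<in> fcover al} = {q - 1, Suc q}"
    using cover_shape h(3,4) by fastforce
  then show ?thesis using 1 by auto
qed

locale fseg =
  fixes al :: "nat list" and i :: nat
  assumes len: "length al \<ge> 2" and pos: "\<forall>k\<in>set al. k > 0" and hd2: "hd al \<ge> 2"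
    and last2: "last al \<ge> 2"
    and i1: "1 \<le> i" and it: "i \<le> length al" and ai2: "al ! (i - 1) \<ge> 2"
begin

definition "A = fa al (i - 1)"
definition "B = fa al i"
definition "bt = B - A - 1"
definition "c j = (if odd i then A + j else B - j)"

lemma posk: "k < length al \<Longrightarrow> al ! k > 0"
  using pos nth_mem by blast

lemma fa1: "fa al 1 = hd al"
  using len by (cases al) (auto simp: fa_def)

lemma fat: "fa al (length al) = fa al (length al - 1) + last al"
proof -
  have "fa al (Suc (length al - 1)) = fa al (length al - 1) + al ! (length al - 1)"
    using len by (intro fa_Suc) auto
  moreover have "al ! (length al - 1) = last al" using len by (metis One_nat_def last_conv_nth list.size(3) not_numeral_le_zero)
  moreover have "Suc (length al - 1) = length al" using len by auto
  ultimately show ?thesis by simp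
qed

lemma n_eq: "fn al = fa al (length al) - 1" by (simp add: fn_def)

lemma BA: "B = A + al ! (i - 1)"
proof -
  have "fa al (Suc (i - 1)) = fa al (i - 1) + al ! (i - 1)" using i1 it by (intro fa_Suc) auto
  then show ?thesis using i1 by (simp add: A_def B_def)
qed

lemma Bt: "B \<le> fa al (length al)" unfolding B_def using it by (rule fa_mono)

lemma bt_eq: "Suc bt = B - A" "1 \<le> bt" using BA ai2 by (auto simp: bt_def)

lemma A_E: "A \<in> felems al \<longleftrightarrow> 2 \<le> i"
proof
  assume "A \<in> felems al"
  then have "A \<noteq> 0" by (auto simp: felems_def)
  show "2 \<le> i"
  proof (rule ccontr)
    assume "\<not> 2 \<le> i"
    then have "i = 1" using i1 by auto
    then have "A = 0" unfolding A_def by (simp add: fa0)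
    then show False using \<open>A \<noteq> 0\<close> by simp
  qed
next
  assume "2 \<le> i"
  then have "fa al 1 \<le> A" unfolding A_def by (intro fa_mono) auto
  then show "A \<in> felems al" using hd2 fa1 BA Bt ai2 by (auto simp: felems_def n_eq)
qed

lemma A_b: "2 \<le> i \<Longrightarrow> 2 \<le> A \<and> Suc A \<le> fn al"
proof -
  assume "2 \<le> i"
  then have "fa al 1 \<le> A" unfolding A_def by (intro fa_mono) auto
  then show ?thesis using hd2 fa1 BA Bt ai2 by (auto simp: n_eq)
qed

lemma B_E: "B \<in> felems al \<longleftrightarrow> i < length al"
proof
  assume "B \<in> felems al"
  then have "B < fa al (length al)" by (auto simp: felems_def n_eq)
  show "i < length al"
  proof (rule ccontr)
    assume "\<not> i < length al"
    then have "i = length al" using it by auto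
    then have "B = fa al (length al)" unfolding B_def by simp
    then show False using \<open>B < fa al (length al)\<close> by simp
  qed
next
  assume "i < length al"
  then have "B \<le> fa al (length al - 1)" unfolding B_def by (intro fa_mono) auto
  then show "B \<in> felems al" using fat last2 BA ai2 by (auto simp: felems_def n_eq)
qed

lemma B_b: "i < length al \<Longrightarrow> 2 \<le> B \<and> Suc B \<le> fn al"
proof -
  assume "i < length al"
  then have "B \<le> fa al (length al - 1)" unfolding B_def by (intro fa_mono) auto
  then show ?thesis using fat last2 BA ai2 by (auto simp: n_eq)
qed

lemma sI: "A \<le> s \<Longrightarrow> s < B \<Longrightarrow> 1 \<le> s \<Longrightarrow> Suc s \<le> fn al
  \<Longrightarrow> (odd i \<longrightarrow> (s, Suc s) \<in> fcover al) \<and> (even i \<longrightarrow> (Suc s, s) \<in> fcover al)"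
  using step_seg[of i al s] i1 it unfolding A_def B_def by auto

lemma sA: "2 \<le> i \<Longrightarrow> (odd i \<longrightarrow> (A, A - 1) \<in> fcover al) \<and> (even i \<longrightarrow> (A - 1, A) \<in> fcover al)"
proof -
  assume i2: "2 \<le> i"
  define k where "k = i - 1"
  have k1: "1 \<le> k" "k \<le> length al" "k - 1 < length al" using i2 it by (auto simp: k_def)
  have e: "fa al (Suc (k - 1)) = fa al (k - 1) + al ! (k - 1)" using k1 by (intro fa_Suc) auto
  have p: "al ! (k - 1) > 0" using k1 by (intro posk) auto
  have Ak: "A = fa al k" by (simp add: A_def k_def)
  have sk: "Suc (k - 1) = k" using k1 by auto
  have e': "fa al k = fa al (k - 1) + al ! (k - 1)" using e sk by simp
  have r: "fa al (k - 1) \<le> A - 1" "A - 1 < fa al k" using e' p A_b[OF i2] Ak by arith+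
  have ab: "1 \<le> A - 1" "Suc (A - 1) \<le> fn al" using A_b[OF i2] by auto
  have "(odd k \<longrightarrow> (A - 1, Suc (A - 1)) \<in> fcover al) \<and> (even k \<longrightarrow> (Suc (A - 1), A - 1) \<in> fcover al)"
    using step_seg[OF k1(1,2) r ab] .
  moreover have "Suc (A - 1) = A" using A_b[OF i2] by auto
  moreover have "odd k \<longleftrightarrow> even i" using i2 by (auto simp: k_def)
  ultimately show ?thesis by auto
qed

lemma sB: "i < length al \<Longrightarrow> (odd i \<longrightarrow> (Suc B, B) \<in> fcover al) \<and> (even i \<longrightarrow> (B, Suc B) \<in> fcover al)"
proof -
  assume i2: "i < length al"
  have e: "fa al (Suc i) = B + al ! i" using i2 by (simp add: fa_Suc B_def)
  have p: "al ! i > 0" using i2 by (intro posk) auto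
  have "(odd (Suc i) \<longrightarrow> (B, Suc B) \<in> fcover al) \<and> (even (Suc i) \<longrightarrow> (Suc B, B) \<in> fcover al)"
    using step_seg[of "Suc i" al B] i2 e p B_b[OF i2] by (auto simp: B_def)
  then show ?thesis by auto
qed

end


context fseg begin

lemma c_range: "j \<le> Suc bt \<Longrightarrow> A \<le> c j \<and> c j \<le> B \<and> (odd i \<longrightarrow> c j = A + j) \<and> (even i \<longrightarrow> c j = B - j)"
  using bt_eq by (auto simp: c_def)

lemma c_E: "1 \<le> j \<Longrightarrow> j \<le> bt \<Longrightarrow> c j \<in> felems al"
  using bt_eq Bt by (auto simp: c_def felems_def n_eq)

lemma c_step: "j \<le> bt \<Longrightarrow> c j \<in> felems al \<Longrightarrow> c (Suc j) \<in> felems al \<Longrightarrow> (c j, c (Suc j)) \<in> fcover al"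
proof -
  assume h: "j \<le> bt" "c j \<in> felems al" "c (Suc j) \<in> felems al"
  show ?thesis
  proof (cases "odd i")
    case True
    then have e: "c j = A + j" "c (Suc j) = Suc (A + j)" by (auto simp: c_def)
    have "A \<le> A + j" "A + j < B" "1 \<le> A + j" "Suc (A + j) \<le> fn al"
      using h e bt_eq by (auto simp: felems_def)
    then show ?thesis using sI[of "A + j"] True e by auto
  next
    case False
    then have e: "c (Suc j) = B - Suc j" "c j = Suc (B - Suc j)" using h bt_eq by (auto simp: c_def)
    have "A \<le> B - Suc j" "B - Suc j < B" "1 \<le> B - Suc j" "Suc (B - Suc j) \<le> fn al"
      using h e bt_eq by (auto simp: felems_def)
    then show ?thesis using sI[of "B - Suc j"] False e by auto
  qed
qed

lemma chain_fle: "j \<le> k \<Longrightarrow> k \<le> Suc bt \<Longrightarrow> c j \<in> felems al \<Longrightarrow> c k \<in> felems al \<Longrightarrow> fle al (c j) (c k)"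
proof -
  assume h: "j \<le> k" "k \<le> Suc bt" "c j \<in> felems al" "c k \<in> felems al"
  show ?thesis
  proof (cases "odd i")
    case True
    then have e: "c j = A + j" "c k = A + k" by (auto simp: c_def)
    have "\<forall>s. A + j \<le> s \<and> s < A + k \<longrightarrow> (s, Suc s) \<in> fcover al"
    proof (intro allI impI)
      fix s assume s: "A + j \<le> s \<and> s < A + k"
      then have "A \<le> s" "s < B" "1 \<le> s" "Suc s \<le> fn al" using h e bt_eq by (auto simp: felems_def)
      then show "(s, Suc s) \<in> fcover al" using sI True by blast
    qed
    then show ?thesis using h e unfolding fle_iff by auto
  next
    case False
    then have e: "c j = B - j" "c k = B - k" by (auto simp: c_def)
    have "\<forall>s. B - k \<le> s \<and> s < B - j \<longrightarrow> (Suc s, s) \<in> fcover al"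
    proof (intro allI impI)
      fix s assume s: "B - k \<le> s \<and> s < B - j"
      then have "A \<le> s" "s < B" "1 \<le> s" "Suc s \<le> fn al" using h e bt_eq by (auto simp: felems_def)
      then show "(Suc s, s) \<in> fcover al" using sI False by blast
    qed
    then show ?thesis using h e unfolding fle_iff by auto
  qed
qed

lemma c_inj: "inj_on c {..Suc bt}"
  using bt_eq by (auto simp: inj_on_def c_def)

lemma c_img: "p \<le> q \<Longrightarrow> q \<le> Suc bt \<Longrightarrow> c ` {p..q} = {min (c p) (c q)..max (c p) (c q)}"
proof -
  assume h: "p \<le> q" "q \<le> Suc bt"
  show ?thesis
  proof (cases "odd i")
    case True
    then have e: "\<And>j. c j = A + j" by (auto simp: c_def)
    have "(\<lambda>j. A + j) ` {p..q} = {A + p..A + q}"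
    proof
      show "{A + p..A + q} \<subseteq> (\<lambda>j. A + j) ` {p..q}"
      proof
        fix u assume "u \<in> {A + p..A + q}"
        then have "u = A + (u - A)" "u - A \<in> {p..q}" by auto
        then show "u \<in> (\<lambda>j. A + j) ` {p..q}" by blast
      qed
    qed auto
    then show ?thesis using h by (simp add: e)
  next
    case False
    then have e: "\<And>j. c j = B - j" by (auto simp: c_def)
    have "(\<lambda>j. B - j) ` {p..q} = {B - q..B - p}"
    proof
      show "{B - q..B - p} \<subseteq> (\<lambda>j. B - j) ` {p..q}"
      proof
        fix u assume "u \<in> {B - q..B - p}"
        then have "u = B - (B - u)" "B - u \<in> {p..q}" using h bt_eq by auto
        then show "u \<in> (\<lambda>j. B - j) ` {p..q}" by blast
      qed
    qed auto
    then show ?thesis using h by (simp add: e)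
  qed
qed

lemma fint_c: "p \<le> q \<Longrightarrow> q \<le> Suc bt \<Longrightarrow> c p \<in> felems al \<Longrightarrow> c q \<in> felems al
   \<Longrightarrow> finterval al (c p) (c q) = c ` {p..q}"
  using finterval_eq[OF chain_fle] c_img by simp

lemma card_fint_c: "p \<le> q \<Longrightarrow> q \<le> Suc bt \<Longrightarrow> c p \<in> felems al \<Longrightarrow> c q \<in> felems al
   \<Longrightarrow> card (finterval al (c p) (c q)) = Suc q - p"
proof -
  assume h: "p \<le> q" "q \<le> Suc bt" "c p \<in> felems al" "c q \<in> felems al"
  have "{p..q} \<subseteq> {..Suc bt}" using h by auto
  then have "inj_on c {p..q}" using c_inj inj_on_subset by blast
  then show ?thesis using fint_c[OF h] by (simp add: card_image)
qed

lemma not_sh: "A < u \<Longrightarrow> u < B \<Longrightarrow> u \<notin> fshared al"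
proof
  assume h: "A < u" "u < B" "u \<in> fshared al"
  then obtain k where k: "u = fa al k" unfolding fshared_def by auto
  show False
  proof (cases "k \<le> i - 1")
    case True then have "fa al k \<le> A" unfolding A_def by (rule fa_mono)
    then show False using h k by simp
  next
    case False then have "i \<le> k" by auto
    then have "B \<le> fa al k" unfolding B_def by (rule fa_mono)
    then show False using h k by simp
  qed
qed

lemma A_sh: "2 \<le> i \<Longrightarrow> A \<in> fshared al"
  unfolding fshared_def A_def using it by (intro CollectI exI[of _ "i - 1"]) auto

lemma B_sh: "i < length al \<Longrightarrow> B \<in> fshared al"
  unfolding fshared_def B_def using i1 by (intro CollectI exI[of _ i]) auto

lemma fseg_eq: "fsegment al i = {A..B} \<inter> felems al"
  by (simp add: fsegment_def A_def B_def)

lemma funsh_iv: "funshared al i = {A<..<B}"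
proof
  show "funshared al i \<subseteq> {A<..<B}"
  proof
    fix u assume u: "u \<in> funshared al i"
    then have u1: "u \<in> {A..B}" "u \<in> felems al" "u \<notin> fshared al"
      unfolding funshared_def fseg_eq by auto
    have "u \<noteq> A" using u1 A_E A_sh by auto
    moreover have "u \<noteq> B" using u1 B_E B_sh by auto
    ultimately show "u \<in> {A<..<B}" using u1 by auto
  qed
next
  show "{A<..<B} \<subseteq> funshared al i"
  proof
    fix u assume u: "u \<in> {A<..<B}"
    then have "u \<in> felems al" using Bt by (auto simp: felems_def n_eq)
    then show "u \<in> funshared al i" using u not_sh unfolding funshared_def fseg_eq by auto
  qed
qed

lemma funsh: "funshared al i = c ` {1..bt}"
proof -
  have "c ` {1..bt} = {min (c 1) (c bt)..max (c 1) (c bt)}" using bt_eq by (intro c_img) auto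
  also have "\<dots> = {A<..<B}" using bt_eq by (auto simp: c_def)
  finally show ?thesis using funsh_iv by simp
qed

lemma c_AB: "{c 0, c (Suc bt)} = {A, B}"
  using bt_eq by (auto simp: c_def)

lemma segsh: "fsegment al i \<inter> fshared al = {c 0, c (Suc bt)} \<inter> felems al"
proof -
  have "fsegment al i \<inter> fshared al = {A, B} \<inter> felems al"
  proof
    show "fsegment al i \<inter> fshared al \<subseteq> {A, B} \<inter> felems al"
    proof
      fix u assume "u \<in> fsegment al i \<inter> fshared al"
      then have "u \<in> {A..B}" "u \<in> felems al" "u \<in> fshared al" unfolding fseg_eq by auto
      moreover have "\<not> (A < u \<and> u < B)" using not_sh \<open>u \<in> fshared al\<close> by blast
      ultimately show "u \<in> {A, B} \<inter> felems al" by auto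
    qed
    show "{A, B} \<inter> felems al \<subseteq> fsegment al i \<inter> fshared al"
      using A_E A_sh B_E B_sh BA unfolding fseg_eq by auto
  qed
  then show ?thesis using c_AB by simp
qed

lemma c0_prop: "c 0 \<in> felems al \<Longrightarrow> 2 \<le> c 0 \<and> Suc (c 0) \<le> fn al \<and> (c 0, c 0 - 1) \<in> fcover al \<and> (c 0, Suc (c 0)) \<in> fcover al"
proof -
  assume h: "c 0 \<in> felems al"
  show ?thesis
  proof (cases "odd i")
    case True
    then have e: "c 0 = A" by (simp add: c_def)
    then have i2: "2 \<le> i" using h A_E by simp
    have "(A, Suc A) \<in> fcover al" using sI[of A] A_b[OF i2] BA ai2 True by auto
    then show ?thesis using e A_b[OF i2] sA[OF i2] True by auto
  next
    case False
    then have e: "c 0 = B" by (simp add: c_def)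
    then have i2: "i < length al" using h B_E by simp
    have "(Suc (B - 1), B - 1) \<in> fcover al" using sI[of "B - 1"] B_b[OF i2] BA ai2 False by auto
    moreover have "Suc (B - 1) = B" using B_b[OF i2] by auto
    ultimately show ?thesis using e B_b[OF i2] sB[OF i2] False by auto
  qed
qed

lemma cp_prop: "c (Suc bt) \<in> felems al \<Longrightarrow> 2 \<le> c (Suc bt) \<and> Suc (c (Suc bt)) \<le> fn al
   \<and> (c (Suc bt) - 1, c (Suc bt)) \<in> fcover al \<and> (Suc (c (Suc bt)), c (Suc bt)) \<in> fcover al"
proof -
  assume h: "c (Suc bt) \<in> felems al"
  show ?thesis
  proof (cases "odd i")
    case True
    then have e: "c (Suc bt) = B" using bt_eq BA by (simp add: c_def)
    then have i2: "i < length al" using h B_E by simp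
    have "(B - 1, Suc (B - 1)) \<in> fcover al" using sI[of "B - 1"] B_b[OF i2] BA ai2 True by auto
    moreover have "Suc (B - 1) = B" using B_b[OF i2] by auto
    ultimately show ?thesis using e B_b[OF i2] sB[OF i2] True by auto
  next
    case False
    then have e: "c (Suc bt) = A" using bt_eq BA by (simp add: c_def)
    then have i2: "2 \<le> i" using h A_E by simp
    have "(Suc A, A) \<in> fcover al" using sI[of A] A_b[OF i2] BA ai2 False by auto
    then show ?thesis using e A_b[OF i2] sA[OF i2] False by auto
  qed
qed

lemma c0_vp: "c 0 \<in> felems al \<Longrightarrow> fis_valley al (c 0) \<and> \<not> fis_peak al (c 0) \<and> (\<forall>w. (w, c 0) \<notin> fcover al)"
proof -
  assume h: "c 0 \<in> felems al"
  note p = c0_prop[OF h]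
  have v: "{w \<in> felems al. (c 0, w) \<in> fcover al} = {c 0 - 1, Suc (c 0)} \<and> (\<forall>w. (w, c 0) \<notin> fcover al)"
    using p by (intro vtype) auto
  then have "{w \<in> felems al. (w, c 0) \<in> fcover al} = {}" by auto
  then show ?thesis using v p unfolding fis_valley_def fis_peak_def by auto
qed

lemma cp_vp: "c (Suc bt) \<in> felems al \<Longrightarrow> fis_peak al (c (Suc bt)) \<and> \<not> fis_valley al (c (Suc bt)) \<and> (\<forall>w. (c (Suc bt), w) \<notin> fcover al)"
proof -
  assume h: "c (Suc bt) \<in> felems al"
  note p = cp_prop[OF h]
  have v: "{w \<in> felems al. (w, c (Suc bt)) \<in> fcover al} = {c (Suc bt) - 1, Suc (c (Suc bt))} \<and> (\<forall>w. (c (Suc bt), w) \<notin> fcover al)"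
    using p by (intro ptype) auto
  then have "{w \<in> felems al. (c (Suc bt), w) \<in> fcover al} = {}" by auto
  then show ?thesis using v p unfolding fis_valley_def fis_peak_def by auto
qed

lemma fvalley_eq: "fvalley al i = (if c 0 \<in> felems al then Some (c 0) else None)"
proof (cases "c 0 \<in> felems al")
  case True
  have "(THE q. q \<in> fsegment al i \<inter> fshared al \<and> fis_valley al q) = c 0"
  proof (rule the_equality)
    show "c 0 \<in> fsegment al i \<inter> fshared al \<and> fis_valley al (c 0)" using True c0_vp segsh by auto
  next
    fix q assume "q \<in> fsegment al i \<inter> fshared al \<and> fis_valley al q"
    then show "q = c 0" using cp_vp segsh by auto
  qed
  then show ?thesis using True c0_vp segsh unfolding fvalley_def by auto
next
  case False
  then show ?thesis using cp_vp segsh unfolding fvalley_def by auto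
qed

lemma fpeak_eq: "fpeak al i = (if c (Suc bt) \<in> felems al then Some (c (Suc bt)) else None)"
proof (cases "c (Suc bt) \<in> felems al")
  case True
  have "(THE q. q \<in> fsegment al i \<inter> fshared al \<and> fis_peak al q) = c (Suc bt)"
  proof (rule the_equality)
    show "c (Suc bt) \<in> fsegment al i \<inter> fshared al \<and> fis_peak al (c (Suc bt))" using True cp_vp segsh by auto
  next
    fix q assume "q \<in> fsegment al i \<inter> fshared al \<and> fis_peak al q"
    then show "q = c (Suc bt)" using c0_vp segsh by auto
  qed
  then show ?thesis using True cp_vp segsh unfolding fpeak_def by auto
next
  case False
  then show ?thesis using c0_vp segsh unfolding fpeak_def by auto
qed

lemma fsmin_eq: "fsmin al i = c 1"
  unfolding fsmin_def funsh
proof (rule the_equality)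
  show "c 1 \<in> c ` {1..bt} \<and> (\<forall>w\<in>c ` {1..bt}. fle al (c 1) w)"
    using bt_eq c_E chain_fle by auto
next
  fix u assume "u \<in> c ` {1..bt} \<and> (\<forall>w\<in>c ` {1..bt}. fle al u w)"
  moreover then have "fle al (c 1) u" using bt_eq c_E chain_fle by auto
  moreover have "c 1 \<in> c ` {1..bt}" using bt_eq by auto
  ultimately show "u = c 1" using fle_antisym by blast
qed

lemma fsmax_eq: "fsmax al i = c bt"
  unfolding fsmax_def funsh
proof (rule the_equality)
  show "c bt \<in> c ` {1..bt} \<and> (\<forall>w\<in>c ` {1..bt}. fle al w (c bt))"
    using bt_eq c_E chain_fle by auto
next
  fix u assume "u \<in> c ` {1..bt} \<and> (\<forall>w\<in>c ` {1..bt}. fle al w u)"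
  moreover then have "fle al u (c bt)" using bt_eq c_E chain_fle by auto
  moreover have "c bt \<in> c ` {1..bt}" using bt_eq by auto
  ultimately show "u = c bt" using fle_antisym by blast
qed

end


context fseg begin

lemma nbrs: "1 \<le> j \<Longrightarrow> j \<le> bt \<Longrightarrow> (w = Suc (c j) \<or> c j = Suc w) \<Longrightarrow> w = c (j - 1) \<or> w = c (Suc j)"
  using bt_eq by (cases "odd i") (auto simp: c_def)

lemma cov_in: "1 \<le> j \<Longrightarrow> j \<le> bt \<Longrightarrow> (w, c j) \<in> fcover al \<longleftrightarrow> (w = c (j - 1) \<and> c (j - 1) \<in> felems al)"
proof
  assume h: "1 \<le> j" "j \<le> bt" and cv: "(w, c j) \<in> fcover al"
  note cs = cover_shape[OF cv]
  then have "w = c (j - 1) \<or> w = c (Suc j)" using nbrs[OF h] by auto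
  moreover have "w \<noteq> c (Suc j)"
  proof
    assume "w = c (Suc j)"
    then have "(c j, w) \<in> fcover al" using c_step[of j] h cs by auto
    then show False using cv no_both' by blast
  qed
  ultimately show "w = c (j - 1) \<and> c (j - 1) \<in> felems al" using cs by auto
next
  assume h: "1 \<le> j" "j \<le> bt" and e: "w = c (j - 1) \<and> c (j - 1) \<in> felems al"
  then have "(c (j - 1), c (Suc (j - 1))) \<in> fcover al" using c_E by (intro c_step) auto
  then show "(w, c j) \<in> fcover al" using e h by auto
qed

lemma cov_out: "1 \<le> j \<Longrightarrow> j \<le> bt \<Longrightarrow> (c j, w) \<in> fcover al \<longleftrightarrow> (w = c (Suc j) \<and> c (Suc j) \<in> felems al)"
proof
  assume h: "1 \<le> j" "j \<le> bt" and cv: "(c j, w) \<in> fcover al"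
  note cs = cover_shape[OF cv]
  then have "w = c (j - 1) \<or> w = c (Suc j)" using nbrs[OF h] by auto
  moreover have "w \<noteq> c (j - 1)"
  proof
    assume "w = c (j - 1)"
    then have "(c (j - 1), c (Suc (j - 1))) \<in> fcover al" using c_E h cs by (intro c_step) auto
    then have "(w, c j) \<in> fcover al" using h \<open>w = c (j - 1)\<close> by auto
    then show False using cv no_both' by blast
  qed
  ultimately show "w = c (Suc j) \<and> c (Suc j) \<in> felems al" using cs by auto
next
  assume h: "1 \<le> j" "j \<le> bt" and e: "w = c (Suc j) \<and> c (Suc j) \<in> felems al"
  then show "(c j, w) \<in> fcover al" using c_E c_step by auto
qed

definition kk :: "nat set \<Rightarrow> nat" where "kk I = Max (insert 0 {j \<in> {1..bt}. c j \<in> I})"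

lemma kk_in: "kk I \<in> insert 0 {j \<in> {1..bt}. c j \<in> I}"
  unfolding kk_def by (rule Max_in) auto

lemma kk_le: "kk I \<le> bt"
  using kk_in[of I] by auto

lemma memk: "fideal al I \<Longrightarrow> 1 \<le> j \<Longrightarrow> j \<le> bt \<Longrightarrow> (c j \<in> I \<longleftrightarrow> j \<le> kk I)"
proof
  assume "1 \<le> j" "j \<le> bt" "c j \<in> I"
  then show "j \<le> kk I" unfolding kk_def by (intro Max_ge) auto
next
  assume hI: "fideal al I" and h: "1 \<le> j" "j \<le> bt" "j \<le> kk I"
  then have k: "1 \<le> kk I" "kk I \<le> bt" "c (kk I) \<in> I" using kk_in[of I] by auto
  then have "fle al (c j) (c (kk I))" using h c_E by (intro chain_fle) auto
  then show "c j \<in> I" using hI k unfolding fideal_def by blast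
qed

lemma kkN: "fideal al I \<Longrightarrow> c 0 \<in> felems al \<Longrightarrow> c 0 \<notin> I \<Longrightarrow> kk I = 0"
proof (rule ccontr)
  assume hI: "fideal al I" and h: "c 0 \<in> felems al" "c 0 \<notin> I" "kk I \<noteq> 0"
  then have "c 1 \<in> I" using memk[OF hI, of 1] bt_eq by auto
  moreover have "fle al (c 0) (c 1)" using h bt_eq c_E by (intro chain_fle) auto
  ultimately show False using hI h unfolding fideal_def by blast
qed

lemma kkP: "fideal al I \<Longrightarrow> c (Suc bt) \<in> felems al \<Longrightarrow> c (Suc bt) \<in> I \<Longrightarrow> kk I = bt"
proof -
  assume hI: "fideal al I" and h: "c (Suc bt) \<in> felems al" "c (Suc bt) \<in> I"
  have "fle al (c bt) (c (Suc bt))" using h bt_eq c_E by (intro chain_fle) auto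
  then have "c bt \<in> I" using hI h unfolding fideal_def by blast
  then have "bt \<le> kk I" using memk[OF hI, of bt] bt_eq by auto
  then show ?thesis using kk_le[of I] by simp
qed

lemma fmax_c: "fideal al I \<Longrightarrow> 1 \<le> j \<Longrightarrow> j \<le> bt \<Longrightarrow>
  (c j \<in> fmax al I \<longleftrightarrow> j = kk I \<and> (j < bt \<or> \<not> (c (Suc bt) \<in> felems al \<and> c (Suc bt) \<in> I)))"
proof (cases "c j \<in> I")
  case False
  assume "fideal al I" "1 \<le> j" "j \<le> bt"
  then show ?thesis using False memk by (auto simp: fmax_def)
next
  case True
  assume hI: "fideal al I" and h: "1 \<le> j" "j \<le> bt"
  have jk: "j \<le> kk I" using memk[OF hI h] True by simp
  have "c j \<in> fmax al I \<longleftrightarrow> (\<forall>w. (c j, w) \<in> fcover al \<longrightarrow> w \<notin> I)" using L1[OF hI True] .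
  also have "\<dots> \<longleftrightarrow> (c (Suc j) \<in> felems al \<longrightarrow> c (Suc j) \<notin> I)" using cov_out[OF h] by auto
  also have "\<dots> \<longleftrightarrow> j = kk I \<and> (j < bt \<or> \<not> (c (Suc bt) \<in> felems al \<and> c (Suc bt) \<in> I))"
  proof (cases "j < bt")
    case True
    then have "c (Suc j) \<in> felems al" using c_E by auto
    then show ?thesis using True memk[OF hI, of "Suc j"] jk by auto
  next
    case False
    then have "j = bt" using h by simp
    then show ?thesis using kk_le[of I] jk by auto
  qed
  finally show ?thesis .
qed

lemma ins_c: "fideal al I \<Longrightarrow> 1 \<le> j \<Longrightarrow> j \<le> bt \<Longrightarrow> c j \<notin> I \<Longrightarrow>
  (fideal al (insert (c j) I) \<longleftrightarrow> j = Suc (kk I) \<and> (2 \<le> j \<or> \<not> (c 0 \<in> felems al \<and> c 0 \<notin> I)))"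
proof -
  assume hI: "fideal al I" and h: "1 \<le> j" "j \<le> bt" and nI: "c j \<notin> I"
  have jk: "kk I < j" using memk[OF hI h] nI by simp
  have "fideal al (insert (c j) I) \<longleftrightarrow> (\<forall>w. (w, c j) \<in> fcover al \<longrightarrow> w \<in> I)"
    using L2[OF hI c_E[OF h] nI] .
  also have "\<dots> \<longleftrightarrow> (c (j - 1) \<in> felems al \<longrightarrow> c (j - 1) \<in> I)" using cov_in[OF h] by auto
  also have "\<dots> \<longleftrightarrow> j = Suc (kk I) \<and> (2 \<le> j \<or> \<not> (c 0 \<in> felems al \<and> c 0 \<notin> I))"
  proof (cases "2 \<le> j")
    case True
    then have "c (j - 1) \<in> felems al" using c_E h by auto
    then show ?thesis using True memk[OF hI, of "j - 1"] jk h by auto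
  next
    case False
    then have "j = 1" using h by simp
    then show ?thesis using jk by auto
  qed
  finally show ?thesis .
qed

lemma T_c: "fideal al I \<Longrightarrow> 1 \<le> j \<Longrightarrow> j \<le> bt \<Longrightarrow>
  fT al (c j) I = (if j = Suc (kk I) \<and> (2 \<le> j \<or> \<not> (c 0 \<in> felems al \<and> c 0 \<notin> I)) then 1
     else if j = kk I \<and> (j < bt \<or> \<not> (c (Suc bt) \<in> felems al \<and> c (Suc bt) \<in> I)) then -1 else 0)"
proof (cases "c j \<in> I")
  case True
  assume hI: "fideal al I" and h: "1 \<le> j" "j \<le> bt"
  have "j \<le> kk I" using memk[OF hI h] True by simp
  then show ?thesis using True fmax_c[OF hI h] unfolding fT_def by auto
next
  case False
  assume hI: "fideal al I" and h: "1 \<le> j" "j \<le> bt"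
  have "kk I < j" using memk[OF hI h] False by simp
  moreover have "c j \<notin> fmax al I" using False by (auto simp: fmax_def)
  ultimately show ?thesis using False ins_c[OF hI h False] c_E[OF h] unfolding fT_def by auto
qed

lemma chi_c: "fideal al I \<Longrightarrow> 1 \<le> j \<Longrightarrow> j \<le> bt \<Longrightarrow>
  fchi al (c j) I = (if j = kk I \<and> (j < bt \<or> \<not> (c (Suc bt) \<in> felems al \<and> c (Suc bt) \<in> I)) then 1 else 0)"
  using fmax_c unfolding fchi_def by auto

lemma chi_v: "fideal al I \<Longrightarrow> c 0 \<in> felems al \<Longrightarrow> fchi al (c 0) I + fT al (c 0) I = (if c 0 \<notin> I then 1 else 0)"
proof (cases "c 0 \<in> I")
  case True
  then show ?thesis unfolding fchi_def fT_def by auto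
next
  case False
  assume hI: "fideal al I" and h: "c 0 \<in> felems al"
  have "fideal al (insert (c 0) I)" using L2[OF hI h False] c0_vp[OF h] by auto
  moreover have "c 0 \<notin> fmax al I" using False by (auto simp: fmax_def)
  ultimately show ?thesis using False h unfolding fchi_def fT_def by auto
qed

lemma chi_p: "fideal al I \<Longrightarrow> c (Suc bt) \<in> felems al \<Longrightarrow> fchi al (c (Suc bt)) I = (if c (Suc bt) \<in> I then 1 else 0)"
proof -
  assume hI: "fideal al I" and h: "c (Suc bt) \<in> felems al"
  show ?thesis
  proof (cases "c (Suc bt) \<in> I")
    case True
    then have "c (Suc bt) \<in> fmax al I" using L1[OF hI True] cp_vp[OF h] by auto
    then show ?thesis using True unfolding fchi_def by auto
  next
    case False
    then show ?thesis unfolding fchi_def fmax_def by auto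
  qed
qed

end



lemma sum_pm:
  fixes g :: "nat \<Rightarrow> int"
  assumes "finite S" "a \<noteq> b"
  shows "(\<Sum>j\<in>S. g j * (if j = a \<and> X j then 1 else if j = b \<and> Y j then -1 else 0))
     = (if a \<in> S \<and> X a then g a else 0) - (if b \<in> S \<and> Y b then g b else 0)"
proof -
  have "(\<Sum>j\<in>S. g j * (if j = a \<and> X j then 1 else if j = b \<and> Y j then -1 else 0))
     = (\<Sum>j\<in>S. (if j = a then (if X a then g a else 0) else 0) - (if j = b then (if Y b then g b else 0) else 0))"
    using assms(2) by (intro sum.cong) auto
  also have "\<dots> = (\<Sum>j\<in>S. (if j = a then (if X a then g a else 0) else 0)) - (\<Sum>j\<in>S. (if j = b then (if Y b then g b else 0) else 0))"
    by (rule sum_subtractf)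
  also have "\<dots> = (if a \<in> S \<and> X a then g a else 0) - (if b \<in> S \<and> Y b then g b else 0)"
    using assms(1) by (simp add: sum.delta)
  finally show ?thesis .
qed

lemma arith_main:
  fixes k m bt :: nat and N P :: bool
  assumes "1 \<le> m" "m \<le> bt" "k \<le> bt" "N \<longrightarrow> k = 0" "P \<longrightarrow> k = bt"
  shows "int (Suc bt) * (if m = k \<and> (m < bt \<or> \<not> P) then 1 else 0) + (if N then 1 else 0) + (if P then 1 else 0)
   = 1 - (\<Sum>j\<in>{1..m}. int j * (if j = Suc k \<and> (2 \<le> j \<or> \<not> N) then 1 else if j = k \<and> (j < bt \<or> \<not> P) then -1 else 0))
       + (\<Sum>j\<in>{Suc m..bt}. int (Suc bt - j) * (if j = Suc k \<and> (2 \<le> j \<or> \<not> N) then 1 else if j = k \<and> (j < bt \<or> \<not> P) then -1 else 0))"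
  apply (subst sum_pm, simp, simp)+
  using assms by (auto simp: of_nat_diff)


theorem theorem3p1:
  fixes alpha :: "nat list" and i x :: nat
  assumes "length alpha \<ge> 2"
    and "\<forall>k \<in> set alpha. k > 0"
    and "hd alpha \<ge> 2" and "last alpha \<ge> 2"
    and "1 \<le> i" and "i \<le> length alpha" and "alpha ! (i - 1) \<ge> 2"
    and "x \<in> funshared alpha i"
  shows "\<forall>I. fideal alpha I \<longrightarrow>
     int (alpha ! (i - 1)) * fchi alpha x I
       + optstat (fchi alpha) (fvalley alpha i) I + optstat (fchi alpha) (fpeak alpha i) I
     = 1 - optstat (fT alpha) (fvalley alpha i) I
       - (\<Sum>u \<in> {u \<in> felems alpha. fle alpha (fsmin alpha i) u \<and> fle alpha u x}.
            int (card (finterval alpha (fsmin alpha i) u)) * fT alpha u I)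
       + (\<Sum>u \<in> {u \<in> felems alpha. flt alpha x u \<and> fle alpha u (fsmax alpha i)}.
            int (card (finterval alpha u (fsmax alpha i))) * fT alpha u I)"
proof (intro allI impI)
  fix I assume hI: "fideal alpha I"
  interpret fseg alpha i using assms by unfold_locales auto
  obtain m where m: "x = c m" "1 \<le> m" "m \<le> bt" using assms(8) funsh by auto
  have cmE: "c m \<in> felems alpha" using m c_E by auto
  have c1E: "c 1 \<in> felems alpha" using bt_eq c_E by auto
  have cbE: "c bt \<in> felems alpha" using bt_eq c_E by auto
  define N where "N = (c 0 \<in> felems alpha \<and> c 0 \<notin> I)"
  define P where "P = (c (Suc bt) \<in> felems alpha \<and> c (Suc bt) \<in> I)"
  define Tf where "Tf j = (if j = Suc (kk I) \<and> (2 \<le> j \<or> \<not> N) then 1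
     else if j = kk I \<and> (j < bt \<or> \<not> P) then -1 else (0::int))" for j
  have T: "fT alpha (c j) I = Tf j" if "1 \<le> j" "j \<le> bt" for j
    using T_c[OF hI that] unfolding Tf_def N_def P_def by simp
  have set1: "{u \<in> felems alpha. fle alpha (fsmin alpha i) u \<and> fle alpha u x} = c ` {1..m}"
  proof -
    have "{u \<in> felems alpha. fle alpha (fsmin alpha i) u \<and> fle alpha u x} = finterval alpha (c 1) (c m)"
      unfolding fsmin_eq m finterval_def by simp
    also have "\<dots> = c ` {1..m}" using m c1E cmE by (intro fint_c) auto
    finally show ?thesis .
  qed
  have set2: "{u \<in> felems alpha. flt alpha x u \<and> fle alpha u (fsmax alpha i)} = c ` {Suc m..bt}"
  proof -
    have "{u \<in> felems alpha. flt alpha x u \<and> fle alpha u (fsmax alpha i)} = finterval alpha (c m) (c bt) - {c m}"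
      unfolding fsmax_eq m finterval_def flt_def by auto
    also have "finterval alpha (c m) (c bt) = c ` {m..bt}" using m cbE cmE by (intro fint_c) auto
    also have "{m..bt} = insert m {Suc m..bt}" using m by auto
    also have "c ` insert m {Suc m..bt} - {c m} = c ` {Suc m..bt}"
    proof -
      have "c m \<notin> c ` {Suc m..bt}"
      proof
        assume "c m \<in> c ` {Suc m..bt}"
        then obtain j where j: "j \<in> {Suc m..bt}" "c m = c j" by auto
        then have "m = j" using c_inj m unfolding inj_on_def by auto
        then show False using j by auto
      qed
      then show ?thesis by auto
    qed
    finally show ?thesis .
  qed
  have inj1: "inj_on c {1..m}" using c_inj inj_on_subset[of c "{..Suc bt}" "{1..m}"] m by auto
  have inj2: "inj_on c {Suc m..bt}" using c_inj inj_on_subset[of c "{..Suc bt}" "{Suc m..bt}"] by auto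
  have cd1: "int (card (finterval alpha (c 1) (c j))) * fT alpha (c j) I = int j * Tf j" if j: "j \<in> {1..m}" for j
  proof -
    have "card (finterval alpha (c 1) (c j)) = Suc j - 1" using j m c1E c_E by (intro card_fint_c) auto
    then show ?thesis using T[of j] j m by auto
  qed
  have cd2: "int (card (finterval alpha (c j) (c bt))) * fT alpha (c j) I = int (Suc bt - j) * Tf j" if j: "j \<in> {Suc m..bt}" for j
  proof -
    have "card (finterval alpha (c j) (c bt)) = Suc bt - j" using j m cbE c_E by (intro card_fint_c) auto
    then show ?thesis using T[of j] j m by auto
  qed
  have sum1: "(\<Sum>u \<in> {u \<in> felems alpha. fle alpha (fsmin alpha i) u \<and> fle alpha u x}.
            int (card (finterval alpha (fsmin alpha i) u)) * fT alpha u I) = (\<Sum>j\<in>{1..m}. int j * Tf j)"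
  proof -
    have "(\<Sum>u \<in> {u \<in> felems alpha. fle alpha (fsmin alpha i) u \<and> fle alpha u x}.
            int (card (finterval alpha (fsmin alpha i) u)) * fT alpha u I)
        = (\<Sum>u \<in> c ` {1..m}. int (card (finterval alpha (c 1) u)) * fT alpha u I)"
      by (subst set1) (simp add: fsmin_eq)
    also have "\<dots> = (\<Sum>j\<in>{1..m}. int j * Tf j)" by (rule sum.reindex_cong[OF inj1 refl]) (rule cd1)
    finally show ?thesis .
  qed
  have sum2: "(\<Sum>u \<in> {u \<in> felems alpha. flt alpha x u \<and> fle alpha u (fsmax alpha i)}.
            int (card (finterval alpha u (fsmax alpha i))) * fT alpha u I) = (\<Sum>j\<in>{Suc m..bt}. int (Suc bt - j) * Tf j)"
  proof -
    have "(\<Sum>u \<in> {u \<in> felems alpha. flt alpha x u \<and> fle alpha u (fsmax alpha i)}.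
            int (card (finterval alpha u (fsmax alpha i))) * fT alpha u I)
        = (\<Sum>u \<in> c ` {Suc m..bt}. int (card (finterval alpha u (c bt))) * fT alpha u I)"
      by (subst set2) (simp add: fsmax_eq)
    also have "\<dots> = (\<Sum>j\<in>{Suc m..bt}. int (Suc bt - j) * Tf j)" by (rule sum.reindex_cong[OF inj2 refl]) (rule cd2)
    finally show ?thesis .
  qed
  have chi: "fchi alpha x I = (if m = kk I \<and> (m < bt \<or> \<not> P) then 1 else 0)"
    using chi_c[OF hI m(2,3)] m unfolding P_def by simp
  have V: "optstat (fchi alpha) (fvalley alpha i) I + optstat (fT alpha) (fvalley alpha i) I = (if N then 1 else 0)"
    using chi_v[OF hI] unfolding fvalley_eq optstat_def N_def by auto
  have PP: "optstat (fchi alpha) (fpeak alpha i) I = (if P then 1 else 0)"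
    using chi_p[OF hI] unfolding fpeak_eq optstat_def P_def by auto
  have al: "int (alpha ! (i - 1)) = int (Suc bt)" using bt_eq BA by simp
  have AR: "int (Suc bt) * (if m = kk I \<and> (m < bt \<or> \<not> P) then 1 else 0) + (if N then 1 else 0) + (if P then 1 else 0)
     = 1 - (\<Sum>j\<in>{1..m}. int j * Tf j) + (\<Sum>j\<in>{Suc m..bt}. int (Suc bt - j) * Tf j)"
    unfolding Tf_def
    using m kk_le[of I] kkN[OF hI] kkP[OF hI] unfolding N_def P_def by (intro arith_main) auto
  show "int (alpha ! (i - 1)) * fchi alpha x I
       + optstat (fchi alpha) (fvalley alpha i) I + optstat (fchi alpha) (fpeak alpha i) I
     = 1 - optstat (fT alpha) (fvalley alpha i) I
       - (\<Sum>u \<in> {u \<in> felems alpha. fle alpha (fsmin alpha i) u \<and> fle alpha u x}.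
            int (card (finterval alpha (fsmin alpha i) u)) * fT alpha u I)
       + (\<Sum>u \<in> {u \<in> felems alpha. flt alpha x u \<and> fle alpha u (fsmax alpha i)}.
            int (card (finterval alpha u (fsmax alpha i))) * fT alpha u I)"
    unfolding sum1 sum2 al chi using V PP AR by linarith
qed


end
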